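(* Let $\mathbb{G}$ be an $E$-group, $\alpha\subseteq E$ and $n\ge1$. Suppose $\mathbb{G}[\alpha]$ is compatible with every free amalgamation chain of length $m$, $1\le m\le n$, whose constituents are $\mathrm{Cay}(\mathbb{G}[\alpha_i])$ with $\alpha_i\subsetneq\alpha$; that is, for every such chain $\mathbb{A}$ and every $w\in\alpha^*$ with $[w]_{\mathbb{G}}=1$, $\pi_w$ is the identity on the vertex set of $\mathbb{A}$. Then $\mathbb{G}[\alpha]$ is $N$-acyclic for $N=n+2$.
   Context: Let $E$ be a finite set. An $E$-group is a group $\mathbb{G}$ together with an inclusion $E\subseteq\mathbb{G}$ such that $E$ generates $\mathbb{G}$ and every $e\in E$ satisfies $e\neq1$, $e^2=1$. For $w=e_1\cdots e_n\in E^*$, $[w]_{\mathbb{G}}=e_1\cdots e_n$; for $\alpha\subseteq E$, $\mathbb{G}[\alpha]$ is the subgroup generated by $\alpha$. An $E$-graph is $\mathbb{H}=(V,(R_e)_{e\in E})$ with each $R_e$ symmetric and each vertex having at most one $R_e$-neighbour; $\pi_e$ is the permutation of $V$ swapping each vertex with its $R_e$-neighbour if any and fixing it otherwise, and $\pi_{e_1\cdots e_n}=\pi_{e_n}\circ\cdots\circ\pi_{e_1}$. Free amalgamation chain: given $m\ge1$, sets $\alpha_1,\dots,\alpha_m\subsetneq\alpha$, and elements $g_i\in\mathbb{G}[\alpha_i]$ for $1\le i<m$ such that for every $1<i<m$ the sets $\mathbb{G}[\alpha_{i-1}\cap\alpha_i]$ and $g_i\mathbb{G}[\alpha_i\cap\alpha_{i+1}]$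 are disjoint, the chain $\mathbb{A}=\bigoplus_{i=1}^m(\mathrm{Cay}(\mathbb{G}[\alpha_i]),g_i)$ is the $E$-graph whose vertex set is the quotient of $\bigcup_{i=1}^m\mathbb{G}[\alpha_i]\times\{i\}$ by the equivalence relation generated by $(g_ih,i)\approx(h,i+1)$ for $1\le i<m$ and $h\in\mathbb{G}[\alpha_i\cap\alpha_{i+1}]$, and whose $R_e$ is the image of $\bigcup_{i: e\in\alpha_i}\{((g,i),(ge,i)):g\in\mathbb{G}[\alpha_i]\}$; its length is $m$. A coset cycle of length $k\ge2$ in the $\alpha$-group $\mathbb{G}[\alpha]$ is a cyclically indexed family $(g_i,\beta_i)_{i\in\mathbb{Z}_k}$ with $g_i\in\mathbb{G}[\alpha]$, $\beta_i\subseteq\alpha$, such that $g_{i+1}\in g_i\mathbb{G}[\beta_i]$ and $g_i\mathbb{G}[\beta_i\cap\beta_{i-1}]\cap g_{i+1}\mathbb{G}[\beta_i\cap\beta_{i+1}]=\emptyset$ for all $i$; $N$-acyclic means no coset cycles of length $k$ with $2\le k\le N$. *)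

theory Defs
  imports "HOL-Algebra.Algebra"
begin

definition E_group :: "('a, 'b) monoid_scheme \<Rightarrow> 'a set \<Rightarrow> bool" where
  "E_group G E \<longleftrightarrow> group G \<and> finite E \<and> E \<subseteq> carrier G \<and> generate G E = carrier G
     \<and> (\<forall>e\<in>E. e \<noteq> \<one>\<^bsub>G\<^esub> \<and> e \<otimes>\<^bsub>G\<^esub> e = \<one>\<^bsub>G\<^esub>)"

definition word_eval :: "('a, 'b) monoid_scheme \<Rightarrow> 'a list \<Rightarrow> 'a" where
  "word_eval G w = foldr (\<lambda>e acc. e \<otimes>\<^bsub>G\<^esub> acc) w \<one>\<^bsub>G\<^esub>"

text \<open>Indices run over 1..m; the constituents are Cay(G[as i]), the gluing elements gs i.\<close>
definition free_chain ::
  "('a, 'b) monoid_scheme \<Rightarrow> 'a set \<Rightarrow> nat \<Rightarrow> (nat \<Rightarrow> 'a set) \<Rightarrow> (nat \<Rightarrow> 'a) \<Rightarrow> bool" where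
  "free_chain G \<alpha> m as gs \<longleftrightarrow> 1 \<le> m
     \<and> (\<forall>i. 1 \<le> i \<and> i \<le> m \<longrightarrow> as i \<subset> \<alpha>)
     \<and> (\<forall>i. 1 \<le> i \<and> i < m \<longrightarrow> gs i \<in> generate G (as i))
     \<and> (\<forall>i. 1 < i \<and> i < m \<longrightarrow>
          generate G (as (i - 1) \<inter> as i) \<inter> (gs i <#\<^bsub>G\<^esub> generate G (as i \<inter> as (i + 1))) = {})"

definition chain_base :: "('a, 'b) monoid_scheme \<Rightarrow> nat \<Rightarrow> (nat \<Rightarrow> 'a set) \<Rightarrow> ('a \<times> nat) set" where
  "chain_base G m as = {(g, i). 1 \<le> i \<and> i \<le> m \<and> g \<in> generate G (as i)}"

definition chain_gen ::
  "('a, 'b) monoid_scheme \<Rightarrow> nat \<Rightarrow> (nat \<Rightarrow> 'a set) \<Rightarrow> (nat \<Rightarrow> 'a) \<Rightarrow> (('a \<times> nat) \<times> ('a \<times> nat)) set" where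
  "chain_gen G m as gs = {((gs i \<otimes>\<^bsub>G\<^esub> h, i), (h, i + 1)) | i h.
       1 \<le> i \<and> i < m \<and> h \<in> generate G (as i \<inter> as (i + 1))}"

definition chain_equiv ::
  "('a, 'b) monoid_scheme \<Rightarrow> nat \<Rightarrow> (nat \<Rightarrow> 'a set) \<Rightarrow> (nat \<Rightarrow> 'a) \<Rightarrow> (('a \<times> nat) \<times> ('a \<times> nat)) set" where
  "chain_equiv G m as gs =
     ((chain_gen G m as gs \<union> (chain_gen G m as gs)\<inverse>)\<^sup>* \<inter> (chain_base G m as \<times> chain_base G m as))"

definition chain_vertices ::
  "('a, 'b) monoid_scheme \<Rightarrow> nat \<Rightarrow> (nat \<Rightarrow> 'a set) \<Rightarrow> (nat \<Rightarrow> 'a) \<Rightarrow> ('a \<times> nat) set set" where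
  "chain_vertices G m as gs = chain_base G m as // chain_equiv G m as gs"

definition chain_edges ::
  "('a, 'b) monoid_scheme \<Rightarrow> nat \<Rightarrow> (nat \<Rightarrow> 'a set) \<Rightarrow> (nat \<Rightarrow> 'a) \<Rightarrow> 'a
     \<Rightarrow> (('a \<times> nat) set \<times> ('a \<times> nat) set) set" where
  "chain_edges G m as gs e = {(U, W) | U W. U \<in> chain_vertices G m as gs \<and> W \<in> chain_vertices G m as gs \<and>
       (\<exists>i g. 1 \<le> i \<and> i \<le> m \<and> e \<in> as i \<and> g \<in> generate G (as i) \<and>
              (g, i) \<in> U \<and> (g \<otimes>\<^bsub>G\<^esub> e, i) \<in> W)}"

definition graph_pi :: "('v \<times> 'v) set \<Rightarrow> 'v \<Rightarrow> 'v" where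
  "graph_pi R x = (if \<exists>!y. (x, y) \<in> R then THE y. (x, y) \<in> R else x)"

definition graph_pi_word :: "('e \<Rightarrow> ('v \<times> 'v) set) \<Rightarrow> 'e list \<Rightarrow> 'v \<Rightarrow> 'v" where
  "graph_pi_word R w = fold (\<lambda>e. graph_pi (R e)) w"

definition coset_cycle ::
  "('a, 'b) monoid_scheme \<Rightarrow> 'a set \<Rightarrow> nat \<Rightarrow> (nat \<Rightarrow> 'a) \<Rightarrow> (nat \<Rightarrow> 'a set) \<Rightarrow> bool" where
  "coset_cycle G \<alpha> k g \<beta> \<longleftrightarrow> 2 \<le> k \<and>
     (\<forall>i<k. g i \<in> generate G \<alpha> \<and> \<beta> i \<subseteq> \<alpha>
        \<and> g ((i + 1) mod k) \<in> g i <#\<^bsub>G\<^esub> generate G (\<beta> i)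
        \<and> (g i <#\<^bsub>G\<^esub> generate G (\<beta> i \<inter> \<beta> ((i + k - 1) mod k)))
          \<inter> (g ((i + 1) mod k) <#\<^bsub>G\<^esub> generate G (\<beta> i \<inter> \<beta> ((i + 1) mod k))) = {})"

definition N_acyclic :: "('a, 'b) monoid_scheme \<Rightarrow> 'a set \<Rightarrow> nat \<Rightarrow> bool" where
  "N_acyclic G \<alpha> N \<longleftrightarrow> \<not> (\<exists>k g \<beta>. 2 \<le> k \<and> k \<le> N \<and> coset_cycle G \<alpha> k g \<beta>)"

end

theory Submission
  imports Defs
begin


context group begin

lemma word_eval_Cons: "word_eval G (a # w) = a \<otimes> word_eval G w"
  by (simp add: word_eval_def)

lemma word_eval_carrier: "set w \<subseteq> carrier G \<Longrightarrow> word_eval G w \<in> carrier G"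
  by (induction w) (auto simp: word_eval_def)

lemma word_eval_append:
  "set a \<subseteq> carrier G \<Longrightarrow> set b \<subseteq> carrier G \<Longrightarrow>
   word_eval G (a @ b) = word_eval G a \<otimes> word_eval G b"
proof (induction a)
  case Nil then show ?case by (simp add: word_eval_def word_eval_carrier)
next
  case (Cons x a)
  then show ?case by (simp add: word_eval_Cons m_assoc word_eval_carrier)
qed

lemma generate_word:
  assumes "A \<subseteq> carrier G" "\<forall>e\<in>A. e \<otimes> e = \<one>" "x \<in> generate G A"
  shows "\<exists>w. set w \<subseteq> A \<and> word_eval G w = x"
  using assms(3)
proof (induction rule: generate.induct)
  case one
  then show ?case by (intro exI[of _ "[]"]) (simp add: word_eval_def)
next
  case (incl h)
  then show ?case using assms(1) by (intro exI[of _ "[h]"]) (auto simp: word_eval_def)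
next
  case (inv h)
  have "inv h = h" using inv assms by (metis inv_equality subsetD)
  then show ?case using inv assms(1) by (intro exI[of _ "[h]"]) (auto simp: word_eval_def)
next
  case (eng h1 h2)
  then obtain w1 w2 where "set w1 \<subseteq> A" "word_eval G w1 = h1" "set w2 \<subseteq> A" "word_eval G w2 = h2"
    by blast
  then show ?case using assms(1) by (intro exI[of _ "w1 @ w2"]) (auto simp: word_eval_append)
qed

lemma l_coset_mem: "x \<in> a <# H \<longleftrightarrow> (\<exists>h\<in>H. x = a \<otimes> h)"
  by (auto simp: l_coset_def)

lemma chain_char:
  assumes gsc: "\<And>i. 1 \<le> i \<Longrightarrow> i < m \<Longrightarrow> gs i \<in> carrier G"
    and asc: "\<And>i. as i \<subseteq> carrier G"
    and free: "\<And>i. 1 < i \<Longrightarrow> i < m \<Longrightarrow>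
          generate G (as (i - 1) \<inter> as i) \<inter> (gs i <# generate G (as i \<inter> as (i + 1))) = {}"
    and pq: "(p, q) \<in> (chain_gen G m as gs \<union> (chain_gen G m as gs)\<inverse>)\<^sup>*"
  shows "p = q \<or> (p, q) \<in> chain_gen G m as gs \<or> (q, p) \<in> chain_gen G m as gs"
  using pq
proof (induction rule: rtrancl_induct)
  case base then show ?case by simp
next
  case (step q r)
  have gc: "\<And>i y. y \<in> generate G (as i \<inter> as (i+1)) \<Longrightarrow> y \<in> carrier G"
    using asc generate_in_carrier by blast
  from step.IH show ?case
  proof (elim disjE)
    assume "p = q" then show ?thesis using step.hyps(2) by auto
  next
    assume "(p, q) \<in> chain_gen G m as gs"
    then obtain i y where pq: "p = (gs i \<otimes> y, i)" "q = (y, i+1)" "1 \<le> i" "i < m"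
      "y \<in> generate G (as i \<inter> as (i+1))" by (auto simp: chain_gen_def)
    from step.hyps(2) show ?thesis
    proof
      assume "(q, r) \<in> chain_gen G m as gs"
      then obtain j z where qr: "q = (gs j \<otimes> z, j)" "r = (z, j+1)" "1 \<le> j" "j < m"
        "z \<in> generate G (as j \<inter> as (j+1))" by (auto simp: chain_gen_def)
      have "j = i + 1" "y = gs j \<otimes> z" using pq qr by auto
      then have "y \<in> generate G (as (j - 1) \<inter> as j) \<inter> (gs j <# generate G (as j \<inter> as (j + 1)))"
        using pq qr by (auto simp: l_coset_mem)
      moreover have "1 < j" using \<open>j = i+1\<close> pq by simp
      ultimately show ?thesis using free[of j] qr by blast
    next
      assume "(q, r) \<in> (chain_gen G m as gs)\<inverse>"
      then obtain j z where qr: "r = (gs j \<otimes> z, j)" "q = (z, j+1)" "1 \<le> j" "j < m"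
        "z \<in> generate G (as j \<inter> as (j+1))" by (auto simp: chain_gen_def)
      then have "j = i" "z = y" using pq by auto
      then show ?thesis using pq qr by simp
    qed
  next
    assume "(q, p) \<in> chain_gen G m as gs"
    then obtain i y where pq: "q = (gs i \<otimes> y, i)" "p = (y, i+1)" "1 \<le> i" "i < m"
      "y \<in> generate G (as i \<inter> as (i+1))" by (auto simp: chain_gen_def)
    from step.hyps(2) show ?thesis
    proof
      assume "(q, r) \<in> chain_gen G m as gs"
      then obtain j z where qr: "q = (gs j \<otimes> z, j)" "r = (z, j+1)" "1 \<le> j" "j < m"
        "z \<in> generate G (as j \<inter> as (j+1))" by (auto simp: chain_gen_def)
      then have "j = i" using pq by auto
      then have "gs i \<otimes> z = gs i \<otimes> y" using pq qr by auto
      then have "z = y" using gsc[of i] pq qr gc by (metis l_cancel)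
      then show ?thesis using pq qr \<open>j = i\<close> by simp
    next
      assume "(q, r) \<in> (chain_gen G m as gs)\<inverse>"
      then obtain j z where qr: "r = (gs j \<otimes> z, j)" "q = (z, j+1)" "1 \<le> j" "j < m"
        "z \<in> generate G (as j \<inter> as (j+1))" by (auto simp: chain_gen_def)
      have "i = j + 1" "z = gs i \<otimes> y" using pq qr by auto
      then have "z \<in> generate G (as (i - 1) \<inter> as i) \<inter> (gs i <# generate G (as i \<inter> as (i + 1)))"
        using pq qr by (auto simp: l_coset_mem)
      moreover have "1 < i" using \<open>i = j+1\<close> qr by simp
      ultimately show ?thesis using free[of i] pq by blast
    qed
  qed
qed

end



definition cls where "cls G m as gs x i = chain_equiv G m as gs `` {(x, i)}"

locale fchain = group G for G (structure) +
  fixes m :: nat and as :: "nat \<Rightarrow> 'a set" and gs :: "nat \<Rightarrow> 'a"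
  assumes gsg: "\<And>i. 1 \<le> i \<Longrightarrow> i < m \<Longrightarrow> gs i \<in> generate G (as i)"
    and asc: "\<And>i. as i \<subseteq> carrier G"
    and free: "\<And>i. 1 < i \<Longrightarrow> i < m \<Longrightarrow>
          generate G (as (i - 1) \<inter> as i) \<inter> (gs i <# generate G (as i \<inter> as (i + 1))) = {}"
begin

lemma gsc: "1 \<le> i \<Longrightarrow> i < m \<Longrightarrow> gs i \<in> carrier G"
  using gsg asc generate_in_carrier by blast

lemma genc: "x \<in> generate G (as i) \<Longrightarrow> x \<in> carrier G"
  using asc generate_in_carrier by blast

lemma genc2: "x \<in> generate G (as i \<inter> B) \<Longrightarrow> x \<in> carrier G"
  using asc generate_in_carrier by (meson inf.coboundedI1)

lemma equiv_ch: "equiv (chain_base G m as) (chain_equiv G m as gs)"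
proof -
  let ?r = "(chain_gen G m as gs \<union> (chain_gen G m as gs)\<inverse>)\<^sup>*"
  have s: "sym ?r" by (rule sym_rtrancl[OF sym_Un_converse])
  show ?thesis unfolding equiv_def chain_equiv_def
  proof (intro conjI)
    show "refl_on (chain_base G m as) (?r \<inter> chain_base G m as \<times> chain_base G m as)"
      by (auto simp: refl_on_def)
    show "sym (?r \<inter> chain_base G m as \<times> chain_base G m as)"
      using s by (auto simp: sym_def)
    show "trans (?r \<inter> chain_base G m as \<times> chain_base G m as)"
      by (auto simp: trans_def intro: rtrancl_trans)
  qed auto
qed

lemma base_iff: "(x, i) \<in> chain_base G m as \<longleftrightarrow> 1 \<le> i \<and> i \<le> m \<and> x \<in> generate G (as i)"
  by (simp add: chain_base_def)

lemma cls_vertex: "(x, i) \<in> chain_base G m as \<Longrightarrow> cls G m as gs x i \<in> chain_vertices G m as gs"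
  by (simp add: cls_def chain_vertices_def quotientI)

lemma cls_self: "(x, i) \<in> chain_base G m as \<Longrightarrow> (x, i) \<in> cls G m as gs x i"
  using equiv_class_self[OF equiv_ch] by (simp add: cls_def)

lemma vertex_cls: "V \<in> chain_vertices G m as gs \<Longrightarrow> (x, i) \<in> V \<Longrightarrow> V = cls G m as gs x i"
  unfolding chain_vertices_def cls_def
  by (metis equiv_class_eq equiv_ch quotientE Image_singleton_iff)

lemma rel_cls: "((x, i), (y, j)) \<in> chain_equiv G m as gs \<Longrightarrow> cls G m as gs x i = cls G m as gs y j"
  unfolding cls_def by (rule equiv_class_eq[OF equiv_ch])

lemma rel_char: "(p, q) \<in> chain_equiv G m as gs \<Longrightarrow>
    p = q \<or> (p, q) \<in> chain_gen G m as gs \<or> (q, p) \<in> chain_gen G m as gs"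
  unfolding chain_equiv_def using chain_char[OF gsc asc free] by blast

lemma mem_cls: "p \<in> cls G m as gs x i \<Longrightarrow>
    p = (x, i) \<or> ((x, i), p) \<in> chain_gen G m as gs \<or> (p, (x, i)) \<in> chain_gen G m as gs"
  unfolding cls_def using rel_char by blast

lemma gen_in_equiv:
  assumes "1 \<le> i" "i < m" "y \<in> generate G (as i \<inter> as (i+1))"
  shows "((gs i \<otimes> y, i), (y, i+1)) \<in> chain_equiv G m as gs"
proof -
  have sg: "subgroup (generate G (as i)) G" "subgroup (generate G (as (i+1))) G"
    using generate_is_subgroup asc by auto
  have "y \<in> generate G (as i)" using assms(3) mono_generate[of "as i \<inter> as (i+1)" "as i"] by auto
  have "y \<in> generate G (as (i+1))" using assms(3) mono_generate[of "as i \<inter> as (i+1)" "as (i+1)"] by auto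
  have "gs i \<otimes> y \<in> generate G (as i)"
    by (rule subgroup.m_closed[OF sg(1) gsg[OF assms(1,2)] \<open>y \<in> generate G (as i)\<close>])
  moreover have "((gs i \<otimes> y, i), (y, i+1)) \<in> chain_gen G m as gs"
    using assms by (auto simp: chain_gen_def)
  then have "((gs i \<otimes> y, i), (y, i+1)) \<in> (chain_gen G m as gs \<union> (chain_gen G m as gs)\<inverse>)\<^sup>*"
    by blast
  moreover have "(gs i \<otimes> y, i) \<in> chain_base G m as" "(y, i+1) \<in> chain_base G m as"
    using assms \<open>y \<in> generate G (as (i+1))\<close> \<open>gs i \<otimes> y \<in> generate G (as i)\<close>
    by (auto simp: chain_base_def)
  ultimately show ?thesis by (simp add: chain_equiv_def)
qed

lemma gen_mult: "y \<in> generate G A \<Longrightarrow> e \<in> A \<Longrightarrow> y \<otimes> e \<in> generate G A"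
  by (rule generate.eng[OF _ generate.incl])

lemma edges_sym: "(U, W) \<in> chain_edges G m as gs e \<Longrightarrow> e \<in> carrier G \<Longrightarrow> e \<otimes> e = \<one>
   \<Longrightarrow> (W, U) \<in> chain_edges G m as gs e"
proof -
  assume "(U, W) \<in> chain_edges G m as gs e" and ec: "e \<in> carrier G" "e \<otimes> e = \<one>"
  then obtain i g where h: "U \<in> chain_vertices G m as gs" "W \<in> chain_vertices G m as gs"
     "1 \<le> i" "i \<le> m" "e \<in> as i" "g \<in> generate G (as i)" "(g, i) \<in> U" "(g \<otimes> e, i) \<in> W"
    unfolding chain_edges_def by blast
  have ge: "g \<otimes> e \<in> generate G (as i)" using gen_mult h(6,5) .
  have gc: "g \<in> carrier G" using genc h(6) .
  have "g \<otimes> e \<otimes> e = g" using ec gc by (simp add: m_assoc)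
  then have "(g \<otimes> e \<otimes> e, i) \<in> U" using h(7) by simp
  then show ?thesis using h(1-5,8) ge unfolding chain_edges_def by blast
qed

lemma edgeI:
  assumes "U \<in> chain_vertices G m as gs" "W \<in> chain_vertices G m as gs" "1 \<le> i" "i \<le> m"
    "e \<in> as i" "g \<in> generate G (as i)" "(g, i) \<in> U" "(g \<otimes> e, i) \<in> W"
  shows "(U, W) \<in> chain_edges G m as gs e"
proof -
  have "\<exists>i g. 1 \<le> i \<and> i \<le> m \<and> e \<in> as i \<and> g \<in> generate G (as i) \<and> (g, i) \<in> U \<and> (g \<otimes> e, i) \<in> W"
    using assms(3-8) by blast
  then show ?thesis using assms(1,2) unfolding chain_edges_def by simp
qed

lemma edgeE:
  assumes "(U, W) \<in> chain_edges G m as gs e"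
  obtains i g where "U \<in> chain_vertices G m as gs" "W \<in> chain_vertices G m as gs" "1 \<le> i" "i \<le> m"
    "e \<in> as i" "g \<in> generate G (as i)" "(g, i) \<in> U" "(g \<otimes> e, i) \<in> W"
  using assms unfolding chain_edges_def by auto

lemma step:
  assumes "1 \<le> i" "i \<le> m" "x \<in> generate G (as i)" "e \<in> as i"
  shows "graph_pi (chain_edges G m as gs e) (cls G m as gs x i) = cls G m as gs (x \<otimes> e) i"
proof -
  have xe: "x \<otimes> e \<in> generate G (as i)" using gen_mult assms(3,4) .
  have ec: "e \<in> carrier G" using assms(4) asc by blast
  have b1: "(x, i) \<in> chain_base G m as" "(x \<otimes> e, i) \<in> chain_base G m as"
    using assms xe by (auto simp: chain_base_def)
  have edge: "(cls G m as gs x i, cls G m as gs (x \<otimes> e) i) \<in> chain_edges G m as gs e"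
    by (rule edgeI[OF cls_vertex[OF b1(1)] cls_vertex[OF b1(2)] assms(1,2,4,3) cls_self[OF b1(1)] cls_self[OF b1(2)]])
  have uniq: "W = cls G m as gs (x \<otimes> e) i" if "(cls G m as gs x i, W) \<in> chain_edges G m as gs e" for W
  proof -
    from that obtain j g where h: "W \<in> chain_vertices G m as gs"
     "1 \<le> j" "j \<le> m" "e \<in> as j" "g \<in> generate G (as j)" "(g, j) \<in> cls G m as gs x i" "(g \<otimes> e, j) \<in> W"
      by (rule edgeE) blast
    have W: "W = cls G m as gs (g \<otimes> e) j" by (rule vertex_cls[OF h(1,7)])
    from mem_cls[OF h(6)] show ?thesis
    proof (elim disjE)
      assume "(g, j) = (x, i)" then show ?thesis using W by simp
    next
      assume "((x, i), (g, j)) \<in> chain_gen G m as gs"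
      then obtain y where y: "x = gs i \<otimes> y" "g = y" "j = i + 1" "i < m" "y \<in> generate G (as i \<inter> as (i+1))"
        by (auto simp: chain_gen_def)
      have "e \<in> as i \<inter> as (i+1)" using y(3) h(4) assms(4) by simp
      then have ye: "y \<otimes> e \<in> generate G (as i \<inter> as (i+1))" using gen_mult y(5) by blast
      have "gs i \<otimes> (y \<otimes> e) = x \<otimes> e"
        using y(1) gsc[OF assms(1) y(4)] genc2[OF y(5)] ec by (simp add: m_assoc)
      then show ?thesis using rel_cls[OF gen_in_equiv[OF assms(1) y(4) ye]] W y(2,3) by simp
    next
      assume "((g, j), (x, i)) \<in> chain_gen G m as gs"
      then obtain y where y: "g = gs j \<otimes> y" "x = y" "i = j + 1" "1 \<le> j" "j < m" "y \<in> generate G (as j \<inter> as (j+1))"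
        by (auto simp: chain_gen_def)
      have "e \<in> as j \<inter> as (j+1)" using y(3) h(4) assms(4) by simp
      then have ye: "y \<otimes> e \<in> generate G (as j \<inter> as (j+1))" using gen_mult y(6) by blast
      have "gs j \<otimes> (y \<otimes> e) = g \<otimes> e"
        using y(1) gsc[OF y(4,5)] genc2[OF y(6)] ec by (simp add: m_assoc)
      then show ?thesis using rel_cls[OF gen_in_equiv[OF y(4) y(5) ye]] W y(2,3) by simp
    qed
  qed
  have "\<exists>!W. (cls G m as gs x i, W) \<in> chain_edges G m as gs e" using edge uniq by blast
  moreover have "(THE W. (cls G m as gs x i, W) \<in> chain_edges G m as gs e) = cls G m as gs (x \<otimes> e) i"
    apply (rule the_equality)
     apply (rule edge)
    apply (erule uniq)
    done
  ultimately show ?thesis unfolding graph_pi_def by simp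
qed

lemma walk:
  assumes "1 \<le> i" "i \<le> m" "x \<in> generate G (as i)" "set u \<subseteq> as i"
  shows "graph_pi_word (chain_edges G m as gs) u (cls G m as gs x i) = cls G m as gs (x \<otimes> word_eval G u) i"
  using assms(3,4)
proof (induction u arbitrary: x)
  case Nil then show ?case using genc by (simp add: graph_pi_word_def word_eval_def)
next
  case (Cons e u)
  have e: "e \<in> as i" using Cons.prems(2) by simp
  have xe: "x \<otimes> e \<in> generate G (as i)" using gen_mult Cons.prems(1) e .
  have "graph_pi_word (chain_edges G m as gs) (e # u) (cls G m as gs x i)
      = graph_pi_word (chain_edges G m as gs) u (cls G m as gs (x \<otimes> e) i)"
    using step[OF assms(1,2) Cons.prems(1) e] by (simp add: graph_pi_word_def)
  also have "\<dots> = cls G m as gs (x \<otimes> e \<otimes> word_eval G u) i" using Cons.IH xe Cons.prems(2) by simp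
  also have "x \<otimes> e \<otimes> word_eval G u = x \<otimes> word_eval G (e # u)"
  proof -
    have "set u \<subseteq> carrier G" using Cons.prems(2) asc by auto
    moreover have "e \<in> carrier G" using e asc by blast
    ultimately show ?thesis using genc[OF Cons.prems(1)] word_eval_carrier[of u]
      by (simp add: word_eval_Cons m_assoc)
  qed
  finally show ?case .
qed

end



lemma graph_pi_word_Cons: "graph_pi_word R (e # w) v = graph_pi_word R w (graph_pi (R e) v)"
  by (simp add: graph_pi_word_def)

lemma graph_pi_word_append: "graph_pi_word R (a @ b) v = graph_pi_word R b (graph_pi_word R a v)"
  by (simp add: graph_pi_word_def)

context fchain begin

lemma single_left:
  assumes hyp: "2 \<le> m \<Longrightarrow> x \<notin> gs 1 <# generate G (as 1 \<inter> as 2)"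
    and p: "p \<in> cls G m as gs x 1"
  shows "p = (x, 1)"
proof -
  from mem_cls[OF p] show ?thesis
  proof (elim disjE)
    assume "((x, 1), p) \<in> chain_gen G m as gs"
    then obtain i y where y: "x = gs i \<otimes> y" "1 = i" "i < m" "y \<in> generate G (as i \<inter> as (i+1))"
      by (auto simp: chain_gen_def)
    then have "x \<in> gs 1 <# generate G (as 1 \<inter> as 2)" by (auto simp: l_coset_mem numeral_2_eq_2)
    then show ?thesis using hyp y by simp
  next
    assume "(p, (x, 1)) \<in> chain_gen G m as gs"
    then show ?thesis by (auto simp: chain_gen_def)
  qed simp
qed

lemma single_right:
  assumes hyp: "2 \<le> m \<Longrightarrow> x \<notin> generate G (as (m - 1) \<inter> as m)"
    and p: "p \<in> cls G m as gs x m"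
  shows "p = (x, m)"
proof -
  from mem_cls[OF p] show ?thesis
  proof (elim disjE)
    assume "((x, m), p) \<in> chain_gen G m as gs"
    then show ?thesis by (auto simp: chain_gen_def)
  next
    assume "(p, (x, m)) \<in> chain_gen G m as gs"
    then obtain i y where y: "x = y" "m = i + 1" "1 \<le> i" "y \<in> generate G (as i \<inter> as (i+1))"
      by (auto simp: chain_gen_def)
    then show ?thesis using hyp by simp
  qed simp
qed

lemma S_back:
  assumes A: "\<And>e. e \<in> A \<Longrightarrow> e \<in> carrier G \<and> e \<otimes> e = \<one>"
    and hyp: "\<And>x. x \<in> generate G (A \<inter> as 1) \<Longrightarrow> 2 \<le> m \<Longrightarrow> x \<notin> gs 1 <# generate G (as 1 \<inter> as 2)"
    and e: "e \<in> A"
    and v: "v \<notin> {cls G m as gs x 1 | x. x \<in> generate G (A \<inter> as 1)}"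
  shows "graph_pi (chain_edges G m as gs e) v \<notin> {cls G m as gs x 1 | x. x \<in> generate G (A \<inter> as 1)}"
proof
  let ?R = "chain_edges G m as gs e"
  assume a: "graph_pi ?R v \<in> {cls G m as gs x 1 | x. x \<in> generate G (A \<inter> as 1)}"
  then obtain x where x: "graph_pi ?R v = cls G m as gs x 1" "x \<in> generate G (A \<inter> as 1)" by blast
  show False
  proof (cases "\<exists>!y. (v, y) \<in> ?R")
    case False
    then have "graph_pi ?R v = v" by (simp add: graph_pi_def)
    then show False using a v by simp
  next
    case True
    then have "(v, THE y. (v, y) \<in> ?R) \<in> ?R" by (rule theI')
    then have "(v, graph_pi ?R v) \<in> ?R" using True by (simp add: graph_pi_def)
    then have "(cls G m as gs x 1, v) \<in> ?R" using edges_sym A[OF e] x(1) by metis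
    then obtain j g where h: "v \<in> chain_vertices G m as gs" "e \<in> as j"
      "(g, j) \<in> cls G m as gs x 1" "(g \<otimes> e, j) \<in> v"
      by (rule edgeE) blast
    have "(g, j) = (x, 1)" by (rule single_left[OF hyp[OF x(2)] h(3)])
    then have "v = cls G m as gs (x \<otimes> e) 1" using vertex_cls[OF h(1)] h(4) by simp
    moreover have "x \<otimes> e \<in> generate G (A \<inter> as 1)"
      using gen_mult[OF x(2)] e h(2) \<open>(g, j) = (x, 1)\<close> by simp
    ultimately show False using v by blast
  qed
qed

lemma S_walk_back:
  assumes A: "\<And>e. e \<in> A \<Longrightarrow> e \<in> carrier G \<and> e \<otimes> e = \<one>"
    and hyp: "\<And>x. x \<in> generate G (A \<inter> as 1) \<Longrightarrow> 2 \<le> m \<Longrightarrow> x \<notin> gs 1 <# generate G (as 1 \<inter> as 2)"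
    and c: "set c \<subseteq> A"
    and v: "v \<notin> {cls G m as gs x 1 | x. x \<in> generate G (A \<inter> as 1)}"
  shows "graph_pi_word (chain_edges G m as gs) c v \<notin> {cls G m as gs x 1 | x. x \<in> generate G (A \<inter> as 1)}"
  using c v
proof (induction c arbitrary: v)
  case Nil then show ?case by (simp add: graph_pi_word_def)
next
  case (Cons e c)
  have e: "e \<in> A" "set c \<subseteq> A" using Cons.prems(1) by auto
  have "graph_pi (chain_edges G m as gs e) v \<notin> {cls G m as gs x 1 | x. x \<in> generate G (A \<inter> as 1)}"
    by (rule S_back[OF A hyp e(1) Cons.prems(2)])
  from Cons.IH[OF e(2) this] show ?case by (simp add: graph_pi_word_Cons)
qed

lemma T_fwd:
  assumes B: "\<And>e. e \<in> B \<Longrightarrow> e \<in> carrier G"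
    and m1: "1 \<le> m"
    and t: "t \<in> generate G (as m)"
    and hyp: "\<And>x. x \<in> t <# generate G (as m \<inter> B) \<Longrightarrow> 2 \<le> m \<Longrightarrow> x \<notin> generate G (as (m - 1) \<inter> as m)"
    and e: "e \<in> B"
    and v: "v \<in> {cls G m as gs x m | x. x \<in> t <# generate G (as m \<inter> B)}"
  shows "graph_pi (chain_edges G m as gs e) v \<in> {cls G m as gs x m | x. x \<in> t <# generate G (as m \<inter> B)}"
proof -
  let ?R = "chain_edges G m as gs e"
  obtain x where x: "v = cls G m as gs x m" "x \<in> t <# generate G (as m \<inter> B)" using v by blast
  then obtain z where z: "x = t \<otimes> z" "z \<in> generate G (as m \<inter> B)" by (auto simp: l_coset_mem)
  have sg: "subgroup (generate G (as m)) G" using generate_is_subgroup asc by auto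
  have zm: "z \<in> generate G (as m)" using z(2) mono_generate[of "as m \<inter> B" "as m"] by auto
  have xm: "x \<in> generate G (as m)" using z(1) subgroup.m_closed[OF sg t zm] by simp
  show ?thesis
  proof (cases "e \<in> as m")
    case True
    have "graph_pi ?R v = cls G m as gs (x \<otimes> e) m" using step[OF m1 order.refl xm True] x(1) by simp
    moreover have "x \<otimes> e = t \<otimes> (z \<otimes> e)"
      using z(1) genc[OF t] genc[OF zm] B[OF e] by (simp add: m_assoc)
    moreover have "z \<otimes> e \<in> generate G (as m \<inter> B)" using gen_mult[OF z(2)] True e by simp
    ultimately show ?thesis by (auto simp: l_coset_mem)
  next
    case False
    have "\<not> (\<exists>y. (v, y) \<in> ?R)"
    proof
      assume "\<exists>y. (v, y) \<in> ?R"
      then obtain y where "(v, y) \<in> ?R" by blast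
      then obtain j g where h: "e \<in> as j" "(g, j) \<in> cls G m as gs x m"
        using x(1) by (elim edgeE) blast
      have "(g, j) = (x, m)" by (rule single_right[OF hyp[OF x(2)] h(2)])
      then show False using h(1) False by simp
    qed
    then have "graph_pi ?R v = v" by (auto simp: graph_pi_def)
    then show ?thesis using v by simp
  qed
qed

lemma T_walk:
  assumes B: "\<And>e. e \<in> B \<Longrightarrow> e \<in> carrier G"
    and m1: "1 \<le> m"
    and t: "t \<in> generate G (as m)"
    and hyp: "\<And>x. x \<in> t <# generate G (as m \<inter> B) \<Longrightarrow> 2 \<le> m \<Longrightarrow> x \<notin> generate G (as (m - 1) \<inter> as m)"
    and b: "set b \<subseteq> B"
    and v: "v \<in> {cls G m as gs x m | x. x \<in> t <# generate G (as m \<inter> B)}"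
  shows "graph_pi_word (chain_edges G m as gs) b v \<in> {cls G m as gs x m | x. x \<in> t <# generate G (as m \<inter> B)}"
  using b v
proof (induction b arbitrary: v)
  case Nil then show ?case by (simp add: graph_pi_word_def)
next
  case (Cons e b)
  have e: "e \<in> B" "set b \<subseteq> B" using Cons.prems(1) by auto
  have "graph_pi (chain_edges G m as gs e) v \<in> {cls G m as gs x m | x. x \<in> t <# generate G (as m \<inter> B)}"
    by (rule T_fwd[OF B m1 t hyp e(1) Cons.prems(2)])
  from Cons.IH[OF e(2) this] show ?case by (simp add: graph_pi_word_Cons)
qed

end



context group begin

lemma cancel_mid: "a \<in> carrier G \<Longrightarrow> b \<in> carrier G \<Longrightarrow> c \<in> carrier G \<Longrightarrow>
   a \<otimes> b \<otimes> (inv b \<otimes> c) = a \<otimes> c"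
proof -
  assume c: "a \<in> carrier G" "b \<in> carrier G" "c \<in> carrier G"
  have "b \<otimes> (inv b \<otimes> c) = c" using c by (simp add: m_assoc[symmetric])
  then show ?thesis using c by (simp add: m_assoc)
qed

lemma main_aux:
  assumes \<alpha>c: "\<alpha> \<subseteq> carrier G" and \<alpha>inv: "\<And>e. e \<in> \<alpha> \<Longrightarrow> e \<otimes> e = \<one>"
    and n1: "1 \<le> n"
    and compat: "\<And>m as gs w v. 1 \<le> m \<Longrightarrow> m \<le> n \<Longrightarrow> free_chain G \<alpha> m as gs \<Longrightarrow>
             set w \<subseteq> \<alpha> \<Longrightarrow> word_eval G w = \<one> \<Longrightarrow> v \<in> chain_vertices G m as gs \<Longrightarrow>
             graph_pi_word (chain_edges G m as gs) w v = v"
    and cyc: "coset_cycle G \<alpha> k g \<beta>" and k2: "2 \<le> k" and kn: "k \<le> n + 2"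
  shows False
proof -
  define bb where "bb i = \<beta> i \<inter> \<alpha>" for i
  define h where "h i = inv (g i) \<otimes> g ((i + 1) mod k)" for i
  have cy: "g i \<in> generate G \<alpha> \<and> \<beta> i \<subseteq> \<alpha>
        \<and> g ((i + 1) mod k) \<in> g i <# generate G (\<beta> i)
        \<and> (g i <# generate G (\<beta> i \<inter> \<beta> ((i + k - 1) mod k)))
          \<inter> (g ((i + 1) mod k) <# generate G (\<beta> i \<inter> \<beta> ((i + 1) mod k))) = {}" if "i < k" for i
    using cyc that unfolding coset_cycle_def by blast
  have bbeq: "bb i = \<beta> i" if "i < k" for i using cy[OF that] by (auto simp: bb_def)
  have bbc: "bb i \<subseteq> carrier G" for i using \<alpha>c by (auto simp: bb_def)
  have bbinv: "\<And>e. e \<in> bb i \<Longrightarrow> e \<in> carrier G \<and> e \<otimes> e = \<one>" for i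
    using \<alpha>c \<alpha>inv by (auto simp: bb_def)
  have gc: "g i \<in> carrier G" if "i < k" for i
    using cy[OF that] generate_in_carrier[OF \<alpha>c] by blast
  have modlt: "(i + 1) mod k < k" for i using k2 by simp
  have hgen: "h i \<in> generate G (bb i)" if ik: "i < k" for i
  proof -
    obtain z where z: "z \<in> generate G (\<beta> i)" "g ((i + 1) mod k) = g i \<otimes> z"
      using cy[OF ik] by (auto simp: l_coset_mem)
    have "z \<in> carrier G" using z(1) generate_in_carrier cy[OF ik] \<alpha>c by blast
    then have "h i = z" using z(2) gc[OF ik] by (simp add: h_def m_assoc[symmetric])
    then show ?thesis using z(1) bbeq[OF ik] by simp
  qed
  have hc: "h i \<in> carrier G" if "i < k" for i using hgen[OF that] generate_in_carrier[OF bbc] by blast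
  have gnext: "g ((i + 1) mod k) = g i \<otimes> h i" if "i < k" for i
    using gc[OF that] gc[OF modlt[of i]] by (simp add: h_def m_assoc[symmetric])
  have disj: "False" if ik: "i < k" and "y \<in> generate G (bb i \<inter> bb ((i + k - 1) mod k))"
     "y \<in> h i <# generate G (bb i \<inter> bb ((i + 1) mod k))" for i y
  proof -
    have p: "(i + k - 1) mod k < k" using k2 by simp
    obtain z where z: "z \<in> generate G (bb i \<inter> bb ((i + 1) mod k))" "y = h i \<otimes> z"
      using \<open>y \<in> h i <# generate G (bb i \<inter> bb ((i + 1) mod k))\<close> by (auto simp: l_coset_mem)
    have zc: "z \<in> carrier G" using z(1) generate_in_carrier[OF le_infI1[OF bbc]] by blast
    have "g i \<otimes> y \<in> g i <# generate G (\<beta> i \<inter> \<beta> ((i + k - 1) mod k))"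
      using that(2) bbeq[OF that(1)] bbeq[OF p] by (auto simp: l_coset_mem)
    moreover have "g i \<otimes> y = g ((i + 1) mod k) \<otimes> z"
      using gnext[OF that(1)] z(2) gc[OF that(1)] hc[OF that(1)] zc by (simp add: m_assoc)
    then have "g i \<otimes> y \<in> g ((i + 1) mod k) <# generate G (\<beta> i \<inter> \<beta> ((i + 1) mod k))"
      using z(1) bbeq[OF that(1)] bbeq[OF modlt[of i]] by (auto simp: l_coset_mem)
    ultimately show False using cy[OF that(1)] by blast
  qed
  have proper: "bb i \<subset> \<alpha>" if "i < k" for i
  proof (rule ccontr)
    assume "\<not> bb i \<subset> \<alpha>"
    then have eq: "bb i = \<alpha>" by (auto simp: bb_def)
    define j where "j = (i + k - 1) mod k"
    have jk: "j < k" using k2 by (simp add: j_def)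
    have j1: "(j + 1) mod k = i"
    proof -
      have "(j + 1) mod k = (i + k - 1 + 1) mod k" by (simp add: j_def mod_Suc_eq)
      also have "i + k - 1 + 1 = i + k" using k2 by simp
      finally show ?thesis using that by simp
    qed
    have sub: "bb j \<subseteq> bb i" using eq by (auto simp: bb_def)
    have sg: "subgroup (generate G (bb j)) G" using generate_is_subgroup[OF bbc] .
    have iv: "inv (h j) \<in> generate G (bb j)" using subgroup.m_inv_closed[OF sg hgen[OF jk]] .
    have "bb j \<inter> bb ((j + 1) mod k) = bb j" using sub j1 by blast
    then have "\<one> \<in> h j <# generate G (bb j \<inter> bb ((j + 1) mod k))"
      using iv hc[OF jk] by (auto simp: l_coset_mem intro!: bexI[of _ "inv (h j)"])
    moreover have "\<one> \<in> generate G (bb j \<inter> bb ((j + k - 1) mod k))" by (rule generate.one)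
    ultimately show False using disj[OF jk] by blast
  qed
  have "\<forall>i. \<exists>w. i < k \<longrightarrow> set w \<subseteq> bb i \<and> word_eval G w = h i"
  proof
    fix i show "\<exists>w. i < k \<longrightarrow> set w \<subseteq> bb i \<and> word_eval G w = h i"
    proof (cases "i < k")
      case True
      have "\<forall>e\<in>bb i. e \<otimes> e = \<one>" using bbinv by blast
      then show ?thesis using generate_word[OF bbc _ hgen[OF True]] by blast
    qed simp
  qed
  then obtain u where u: "\<And>i. i < k \<Longrightarrow> set (u i) \<subseteq> bb i \<and> word_eval G (u i) = h i"
    by metis
  have ua: "set (u i) \<subseteq> \<alpha>" if "i < k" for i using u[OF that] by (auto simp: bb_def)
  have uc: "set (u i) \<subseteq> carrier G" if "i < k" for i using ua[OF that] \<alpha>c by blast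
  define m where "m = (if k = 2 then 1 else k - 2)"
  have m1: "1 \<le> m" and mn: "m \<le> n" and mk: "m < k" using k2 kn n1 by (auto simp: m_def)
  have fc1: "\<forall>i. 1 \<le> i \<and> i \<le> m \<longrightarrow> bb i \<subset> \<alpha>"
  proof (intro allI impI)
    fix i assume "1 \<le> i \<and> i \<le> m"
    then have "i < k" using mk by linarith
    then show "bb i \<subset> \<alpha>" by (rule proper)
  qed
  have fc2: "\<forall>i. 1 \<le> i \<and> i < m \<longrightarrow> h i \<in> generate G (bb i)"
  proof (intro allI impI)
    fix i assume "1 \<le> i \<and> i < m"
    then have "i < k" using mk by linarith
    then show "h i \<in> generate G (bb i)" by (rule hgen)
  qed
  have fc3: "\<forall>i. 1 < i \<and> i < m \<longrightarrow>
      generate G (bb (i - 1) \<inter> bb i) \<inter> (h i <# generate G (bb i \<inter> bb (i + 1))) = {}"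
  proof (intro allI impI)
    fix i assume i: "1 < i \<and> i < m"
    have ik: "i + 1 < k"
    proof (cases "k = 2")
      case True then have "m = 1" by (simp add: m_def)
      then show ?thesis using i by simp
    next
      case False then have "m = k - 2" by (simp add: m_def)
      then show ?thesis using i by linarith
    qed
    have a: "(i + k - 1) mod k = i - 1"
    proof -
      have "i + k - 1 = (i - 1) + k" using i by simp
      then have "(i + k - 1) mod k = ((i - 1) + k) mod k" by (rule arg_cong)
      also have "\<dots> = (i - 1) mod k" by (rule mod_add_self2)
      also have "\<dots> = i - 1" using ik by simp
      finally show ?thesis .
    qed
    have b: "(i + 1) mod k = i + 1" using ik by simp
    have e1: "bb (i - 1) \<inter> bb i = bb i \<inter> bb ((i + k - 1) mod k)" unfolding a by (rule Int_commute)
    have e2: "bb i \<inter> bb (i + 1) = bb i \<inter> bb ((i + 1) mod k)" using b by simp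
    have ik': "i < k" using ik by simp
    show "generate G (bb (i - 1) \<inter> bb i) \<inter> (h i <# generate G (bb i \<inter> bb (i + 1))) = {}"
      unfolding e1 e2 using disj[OF ik'] by blast
  qed
  have fc: "free_chain G \<alpha> m bb h"
    unfolding free_chain_def using m1 fc1 fc2 fc3 by (simp only:)
  interpret fc: fchain G m bb h
  proof
    show "\<And>i. 1 \<le> i \<Longrightarrow> i < m \<Longrightarrow> h i \<in> generate G (bb i)" using fc2 by blast
    show "\<And>i. bb i \<subseteq> carrier G" by (rule bbc)
    show "\<And>i. 1 < i \<Longrightarrow> i < m \<Longrightarrow>
          generate G (bb (i - 1) \<inter> bb i) \<inter> (h i <# generate G (bb i \<inter> bb (i + 1))) = {}"
      using fc3 by blast
  qed
  let ?R = "chain_edges G m bb h"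
  let ?v0 = "cls G m bb h \<one> 1"
  have b0: "(\<one>, 1) \<in> chain_base G m bb" using m1 by (simp add: chain_base_def generate.one)
  have v0: "?v0 \<in> chain_vertices G m bb h" by (rule fc.cls_vertex[OF b0])
  have closed: "graph_pi_word ?R w ?v0 = ?v0" if "set w \<subseteq> \<alpha>" "word_eval G w = \<one>" for w
    using compat[OF m1 mn fc that v0] .
  let ?S = "{cls G m bb h x 1 | x. x \<in> generate G (bb 0 \<inter> bb 1)}"
  have v0S: "?v0 \<in> ?S" using generate.one[of G "bb 0 \<inter> bb 1"] by blast
  have Sback: "v \<in> ?S" if "graph_pi_word ?R (u 0) v \<in> ?S" 
     and hyp: "\<And>x. x \<in> generate G (bb 0 \<inter> bb 1) \<Longrightarrow> 2 \<le> m \<Longrightarrow> x \<notin> h 1 <# generate G (bb 1 \<inter> bb 2)" for v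
  proof (rule ccontr)
    assume nv: "v \<notin> ?S"
    have u0: "set (u 0) \<subseteq> bb 0" using u[of 0] k2 by simp
    have "graph_pi_word ?R (u 0) v \<notin> ?S" by (rule fc.S_walk_back[OF bbinv hyp u0 nv])
    then show False using that(1) by blast
  qed
  show False
  proof (cases "k = 2")
    case True
    then have m: "m = 1" by (simp add: m_def)
    have k1: "1 < k" "0 < k" using True by auto
    have u1: "set (u 1) \<subseteq> bb 1" "word_eval G (u 1) = h 1" using u[OF k1(1)] by auto
    have u0: "set (u 0) \<subseteq> bb 0" "word_eval G (u 0) = h 0" using u[OF k1(2)] by auto
    have "graph_pi_word ?R (u 1) ?v0 = cls G m bb h (\<one> \<otimes> word_eval G (u 1)) 1"
      by (rule fc.walk[OF order.refl m1 generate.one u1(1)])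
    then have w1: "graph_pi_word ?R (u 1) ?v0 = cls G m bb h (h 1) 1"
      using u1(2) hc[OF k1(1)] by simp
    have "word_eval G (u 1 @ u 0) = h 1 \<otimes> h 0"
      using word_eval_append[OF uc[OF k1(1)] uc[OF k1(2)]] u1(2) u0(2) by simp
    also have "\<dots> = \<one>"
    proof -
      have "(1 + 1) mod k = 0" "(0 + 1) mod k = 1" using True by auto
      then have "h 1 = inv (g 1) \<otimes> g 0" "h 0 = inv (g 0) \<otimes> g 1" by (simp_all add: h_def)
      moreover have "g 0 \<otimes> (inv (g 0) \<otimes> g 1) = g 1"
        using gc[OF k1(1)] gc[OF k1(2)] by (simp add: m_assoc[symmetric])
      ultimately show ?thesis using gc[OF k1(1)] gc[OF k1(2)] by (simp add: m_assoc)
    qed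
    finally have ev: "word_eval G (u 1 @ u 0) = \<one>" .
    have sa: "set (u 1 @ u 0) \<subseteq> \<alpha>" using ua[OF k1(1)] ua[OF k1(2)] by simp
    have "graph_pi_word ?R (u 0) (cls G m bb h (h 1) 1) = ?v0"
      using closed[OF sa ev] w1 by (simp add: graph_pi_word_append)
    then have "graph_pi_word ?R (u 0) (cls G m bb h (h 1) 1) \<in> ?S" using v0S by simp
    then have "cls G m bb h (h 1) 1 \<in> ?S" by (rule Sback) (simp add: m)
    then obtain x where x: "cls G m bb h (h 1) 1 = cls G m bb h x 1" "x \<in> generate G (bb 0 \<inter> bb 1)"
      by blast
    have "(h 1, 1) \<in> chain_base G m bb" using m1 hgen[OF k1(1)] by (simp add: chain_base_def)
    then have "(h 1, 1) \<in> cls G m bb h (h 1) 1" by (rule fc.cls_self)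
    then have "(h 1, 1) \<in> cls G m bb h x 1" using x(1) by simp
    moreover have hyp1: "2 \<le> m \<Longrightarrow> x \<notin> h 1 <# generate G (bb 1 \<inter> bb 2)" using m by simp
    ultimately have "(h 1, 1) = (x, 1)" using fc.single_left by blast
    then have hx: "h 1 = x" by simp
    have e1: "(1 + k - 1) mod k = 0" "(1 + 1) mod k = 0" using True by auto
    have "h 1 \<in> generate G (bb 1 \<inter> bb ((1 + k - 1) mod k))" using x(2) hx e1 by (simp add: Int_commute)
    moreover have "h 1 \<in> h 1 <# generate G (bb 1 \<inter> bb ((1 + 1) mod k))"
      using hc[OF k1(1)] generate.one[of G "bb 1 \<inter> bb ((1 + 1) mod k)"] unfolding l_coset_mem
      by (intro bexI[of _ \<one>]) simp_all
    ultimately show False by (rule disj[OF k1(1)])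
  next
    case False
    then have k3: "3 \<le> k" and m: "m = k - 2" using k2 by (auto simp: m_def)
    let ?K = "k - 1"
    have K: "?K < k" "(?K + 1) mod k = 0" "0 < k" "(0 + 1) mod k = 1" "m + 1 = ?K" "1 < k"
       "(1 + 1) mod k = 2" "(1 + k - 1) mod k = 0"
      using k3 m by auto
    have walkA: "\<exists>a. set a \<subseteq> \<alpha> \<and> word_eval G a = inv (g 1) \<otimes> g (j + 1)
                  \<and> graph_pi_word ?R a ?v0 = cls G m bb h (h j) j" if "1 \<le> j" "j \<le> m" for j
      using that
    proof (induction j)
      case 0 then show ?case by simp
    next
      case (Suc j)
      show ?case
      proof (cases "j = 0")
        case True
        have us: "set (u 1) \<subseteq> bb 1" "word_eval G (u 1) = h 1" using u[OF K(6)] by auto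
        have "graph_pi_word ?R (u 1) ?v0 = cls G m bb h (\<one> \<otimes> word_eval G (u 1)) 1"
          by (rule fc.walk[OF order.refl m1 generate.one us(1)])
        then have w: "graph_pi_word ?R (u 1) ?v0 = cls G m bb h (h 1) 1" using us(2) hc[OF K(6)] by simp
        have "h 1 = inv (g 1) \<otimes> g 2" using K(7) by (simp add: h_def)
        then show ?thesis using True ua[OF K(6)] us(2) w by (intro exI[of _ "u 1"]) (simp add: numeral_2_eq_2)
      next
        case False
        then have j1: "1 \<le> j" "j \<le> m" "j < m" using Suc.prems by auto
        obtain a where a: "set a \<subseteq> \<alpha>" "word_eval G a = inv (g 1) \<otimes> g (j + 1)"
          "graph_pi_word ?R a ?v0 = cls G m bb h (h j) j" using Suc.IH[OF j1(1,2)] by blast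
        have jk: "j < k" "j + 1 < k" "j + 1 + 1 < k" using j1 mk m k3 by linarith+
        have us: "set (u (j+1)) \<subseteq> bb (j+1)" "word_eval G (u (j+1)) = h (j+1)" using u[OF jk(2)] by auto
        have "cls G m bb h (h j \<otimes> \<one>) j = cls G m bb h \<one> (j + 1)"
          by (rule fc.rel_cls[OF fc.gen_in_equiv[OF j1(1) j1(3) generate.one]])
        then have e1: "cls G m bb h (h j) j = cls G m bb h \<one> (j + 1)" using hc[OF jk(1)] by simp
        have j1': "1 \<le> j + 1" "j + 1 \<le> m" using j1 by auto
        have "graph_pi_word ?R (u (j+1)) (cls G m bb h \<one> (j + 1))
               = cls G m bb h (\<one> \<otimes> word_eval G (u (j+1))) (j + 1)"
          by (rule fc.walk[OF j1' generate.one us(1)])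
        then have w: "graph_pi_word ?R (a @ u (j+1)) ?v0 = cls G m bb h (h (Suc j)) (Suc j)"
          using a(3) e1 us(2) hc[OF jk(2)] by (simp add: graph_pi_word_append)
        have ac: "set a \<subseteq> carrier G" using a(1) \<alpha>c by blast
        have hj: "h (j + 1) = inv (g (j+1)) \<otimes> g (j + 1 + 1)" using jk(3) by (simp add: h_def)
        have "word_eval G (a @ u (j+1)) = inv (g 1) \<otimes> g (j + 1) \<otimes> (inv (g (j+1)) \<otimes> g (j + 1 + 1))"
          using word_eval_append[OF ac uc[OF jk(2)]] a(2) us(2) hj by simp
        also have "\<dots> = inv (g 1) \<otimes> g (Suc j + 1)"
          using cancel_mid[OF inv_closed[OF gc[OF K(6)]] gc[OF jk(2)] gc[OF jk(3)]] by simp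
        finally show ?thesis using w a(1) ua[OF jk(2)] by (intro exI[of _ "a @ u (j+1)"]) simp
      qed
    qed
    obtain a where a: "set a \<subseteq> \<alpha>" "word_eval G a = inv (g 1) \<otimes> g ?K"
          "graph_pi_word ?R a ?v0 = cls G m bb h (h m) m"
      using walkA[OF m1 order.refl] K(5) by auto
    have ub: "set (u ?K) \<subseteq> bb ?K" "word_eval G (u ?K) = h ?K" using u[OF K(1)] by auto
    have uc0: "set (u 0) \<subseteq> bb 0" "word_eval G (u 0) = h 0" using u[OF K(3)] by auto
    have ac: "set a \<subseteq> carrier G" using a(1) \<alpha>c by blast
    have hK: "h ?K = inv (g ?K) \<otimes> g 0" using K(2) by (simp add: h_def)
    have h0: "h 0 = inv (g 0) \<otimes> g 1" using K(4) by (simp add: h_def)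
    have "word_eval G (a @ u ?K @ u 0) = word_eval G a \<otimes> (h ?K \<otimes> h 0)"
      using word_eval_append[OF uc[OF K(1)] uc[OF K(3)]] word_eval_append[OF ac, of "u ?K @ u 0"]
        uc[OF K(1)] uc[OF K(3)] ub(2) uc0(2) by simp
    also have "h ?K \<otimes> h 0 = inv (g ?K) \<otimes> g 1"
      using hK h0 cancel_mid[OF inv_closed[OF gc[OF K(1)]] gc[OF K(3)] gc[OF K(6)]] by simp
    also have "word_eval G a \<otimes> (inv (g ?K) \<otimes> g 1) = \<one>"
      using a(2) cancel_mid[OF inv_closed[OF gc[OF K(6)]] gc[OF K(1)] gc[OF K(6)]] gc[OF K(6)] by simp
    finally have ev: "word_eval G (a @ u ?K @ u 0) = \<one>" .
    have sa: "set (a @ u ?K @ u 0) \<subseteq> \<alpha>" using a(1) ua[OF K(1)] ua[OF K(3)] by simp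
    have cl: "graph_pi_word ?R (u 0) (graph_pi_word ?R (u ?K) (cls G m bb h (h m) m)) = ?v0"
      using closed[OF sa ev] a(3) by (simp add: graph_pi_word_append)
    let ?T = "{cls G m bb h x m | x. x \<in> h m <# generate G (bb m \<inter> bb ?K)}"
    have Bc: "\<And>e. e \<in> bb ?K \<Longrightarrow> e \<in> carrier G" using bbinv by blast
    have tm: "h m \<in> generate G (bb m)" using hgen[OF mk] .
    have hypT: "x \<notin> generate G (bb (m - 1) \<inter> bb m)"
      if "x \<in> h m <# generate G (bb m \<inter> bb ?K)" "2 \<le> m" for x
    proof
      assume xin: "x \<in> generate G (bb (m - 1) \<inter> bb m)"
      have "(m + k - 1) mod k = m - 1"
      proof -
        have "m + k - 1 = (m - 1) + k" using m1 by simp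
        then have "(m + k - 1) mod k = ((m - 1) + k) mod k" by (rule arg_cong)
        also have "\<dots> = (m - 1) mod k" by (rule mod_add_self2)
        also have "\<dots> = m - 1" using mk by simp
        finally show ?thesis .
      qed
      then have "x \<in> generate G (bb m \<inter> bb ((m + k - 1) mod k))" using xin by (simp add: Int_commute)
      moreover have "x \<in> h m <# generate G (bb m \<inter> bb ((m + 1) mod k))" using that(1) K(5) K(1) by simp
      ultimately show False by (rule disj[OF mk])
    qed
    have v1T: "cls G m bb h (h m) m \<in> ?T"
    proof -
      have "h m \<in> h m <# generate G (bb m \<inter> bb ?K)"
        using hc[OF mk] generate.one[of G "bb m \<inter> bb ?K"] unfolding l_coset_mem
        by (intro bexI[of _ \<one>]) simp_all
      then show ?thesis by blast
    qed
    have v2T: "graph_pi_word ?R (u ?K) (cls G m bb h (h m) m) \<in> ?T"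
      by (rule fc.T_walk[OF Bc m1 tm hypT ub(1) v1T])
    then obtain x' where x': "graph_pi_word ?R (u ?K) (cls G m bb h (h m) m) = cls G m bb h x' m"
      "x' \<in> h m <# generate G (bb m \<inter> bb ?K)" by blast
    have hypS: "x \<notin> h 1 <# generate G (bb 1 \<inter> bb 2)"
      if "x \<in> generate G (bb 0 \<inter> bb 1)" "2 \<le> m" for x
    proof
      assume xin: "x \<in> h 1 <# generate G (bb 1 \<inter> bb 2)"
      have "x \<in> generate G (bb 1 \<inter> bb ((1 + k - 1) mod k))" using that(1) K(8) by (simp add: Int_commute)
      moreover have "x \<in> h 1 <# generate G (bb 1 \<inter> bb ((1 + 1) mod k))" using xin K(7) by simp
      ultimately show False by (rule disj[OF K(6)])
    qed
    have "graph_pi_word ?R (u 0) (cls G m bb h x' m) \<in> ?S" using cl x'(1) v0S by simp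
    then have "cls G m bb h x' m \<in> ?S" by (rule Sback) (rule hypS)
    then obtain x where x: "cls G m bb h x' m = cls G m bb h x 1" "x \<in> generate G (bb 0 \<inter> bb 1)"
      by blast
    have sg: "subgroup (generate G (bb m)) G" using generate_is_subgroup[OF bbc] .
    obtain z where z: "x' = h m \<otimes> z" "z \<in> generate G (bb m \<inter> bb ?K)" using x'(2) by (auto simp: l_coset_mem)
    have "z \<in> generate G (bb m)" using z(2) mono_generate[of "bb m \<inter> bb ?K" "bb m"] by auto
    then have "x' \<in> generate G (bb m)" using z(1) subgroup.m_closed[OF sg tm] by simp
    then have "(x', m) \<in> chain_base G m bb" using m1 by (simp add: chain_base_def)
    then have "(x', m) \<in> cls G m bb h x' m" by (rule fc.cls_self)
    then have "(x', m) \<in> cls G m bb h x 1" using x(1) by simp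
    moreover have "2 \<le> m \<Longrightarrow> x \<notin> h 1 <# generate G (bb 1 \<inter> bb 2)" using hypS[OF x(2)] .
    ultimately have "(x', m) = (x, 1)" using fc.single_left by blast
    then have mm: "m = 1" "x' = x" by auto
    have "x \<in> generate G (bb 1 \<inter> bb ((1 + k - 1) mod k))" using x(2) K(8) by (simp add: Int_commute)
    moreover have "x \<in> h 1 <# generate G (bb 1 \<inter> bb ((1 + 1) mod k))"
      using x'(2) mm K(5) K(7) by simp
    ultimately show False by (rule disj[OF K(6)])
  qed
qed

end

theorem mainTheorem8:
  fixes G :: "('a, 'b) monoid_scheme" and E \<alpha> :: "'a set" and n :: nat
  assumes "E_group G E"
    and "\<alpha> \<subseteq> E"
    and "1 \<le> n"
    and compat: "\<And>m as gs w v. 1 \<le> m \<Longrightarrow> m \<le> n \<Longrightarrow> free_chain G \<alpha> m as gs \<Longrightarrow>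
             set w \<subseteq> \<alpha> \<Longrightarrow> word_eval G w = \<one>\<^bsub>G\<^esub> \<Longrightarrow> v \<in> chain_vertices G m as gs \<Longrightarrow>
             graph_pi_word (chain_edges G m as gs) w v = v"
  shows "N_acyclic G \<alpha> (n + 2)"
proof -
  have grp: "group G" and Ec: "E \<subseteq> carrier G" and Einv: "\<forall>e\<in>E. e \<otimes>\<^bsub>G\<^esub> e = \<one>\<^bsub>G\<^esub>"
    using assms(1) unfolding E_group_def by auto
  have \<alpha>c: "\<alpha> \<subseteq> carrier G" using assms(2) Ec by blast
  have \<alpha>inv: "\<And>e. e \<in> \<alpha> \<Longrightarrow> e \<otimes>\<^bsub>G\<^esub> e = \<one>\<^bsub>G\<^esub>" using assms(2) Einv by blast
  show ?thesis
    unfolding N_acyclic_def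
  proof
    assume "\<exists>k g \<beta>. 2 \<le> k \<and> k \<le> n + 2 \<and> coset_cycle G \<alpha> k g \<beta>"
    then obtain k g \<beta> where "2 \<le> k" "k \<le> n + 2" "coset_cycle G \<alpha> k g \<beta>" by blast
    then show False using group.main_aux[OF grp \<alpha>c \<alpha>inv assms(3) compat] by blast
  qed
qed

end
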